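(* In the setting below, for $K$ sufficiently large and $L=L(K)$ as below, there is $K'>K$ such that for all $X,Z\in{\bf Y}$, $x\in\mathcal C(X)$, $z\in\mathcal C(Z)$, $$d_{\mathcal C({\bf Y})}(x,z)\ge\frac12\sum_{W\in{\bf Y}_{K'}(x,z)}d_W(x,z).$$
   Context: Let ${\bf Y}$ be a set, $\xi>0$, and for each $Y\in{\bf Y}$ let $\mathcal C(Y)$ be a geodesic metric space and $\pi_Y$ a map from ${\bf Y}\setminus\{Y\}$ to subsets of $\mathcal C(Y)$ with $\mathrm{diam}\,\pi_Y(X)<\xi$. Set $d^\pi_Y(X,Z)=\mathrm{diam}(\pi_Y(X)\cup\pi_Y(Z))$ and assume: for pairwise distinct $X,Y,Z$, $\min\{d^\pi_Y(X,Z),d^\pi_Z(X,Y)\}<\xi$; and $\{Y:d^\pi_Y(X,Z)\ge\xi\}$ is finite for all $X,Z$. For $x\in\mathcal C(X)$, $X\ne Y$, put $\pi_Y(x)=\pi_Y(X)$; for $y\in\mathcal C(Y)$, $\pi_Y(y)=\{y\}$; $d^\pi_Y(x,z)=\mathrm{diam}(\pi_Y(x)\cup\pi_Y(z))$. $\mathcal H(X,Z)$: pairs $(X',Z')$ with either $d^\pi_X(X',Z')>2\xi$ and $d^\pi_Z(X',Z')>2\xi$; or $X'=X$ and $d^\pi_Z(X,Z')>2\xi$; or $Z'=Z$ and $d^\pi_X(X',Z)>2\xi$; or $(X',Z')=(X,Z)$. $d_Y(X,Z)=\inf_{\mathcal H(X,Z)}d^\pi_Y(X',Z')$. For points $x\in\mathcal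 C(X)$, $z\in\mathcal C(Z)$: if $X,Z\ne Y$ then $d_Y(x,z)=d_Y(X,Z)$, and if $x\in\mathcal C(Y)$ or $z\in\mathcal C(Y)$ then $d_Y(x,z)=d^\pi_Y(x,z)$. ${\bf Y}_K(X,Z)=\{Y\ne X,Z:d_Y(X,Z)>K\}$ and ${\bf Y}_K(x,z)=\{Y: d_Y(x,z)>K\}$. $\mathcal P_K({\bf Y})$: graph on ${\bf Y}$, distinct $X,Z$ adjacent iff ${\bf Y}_K(X,Z)=\emptyset$. $\mathcal C({\bf Y})$: path metric space obtained from $\bigsqcup_Y\mathcal C(Y)$ by attaching, for each edge $X,Z$ of $\mathcal P_K({\bf Y})$, an edge of length $L$ from every point of $\pi_X(Z)$ to every point of $\pi_Z(X)$, where $L=L(K)$ has $|L-K|$ bounded by a constant depending only on $\xi$ and is large enough that $d_{\mathcal C({\bf Y})}(x,z)\ge d^\pi_Y(x,z)$ for all $Y,x,z$. *)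

theory Defs
  imports "HOL-Analysis.Analysis"
begin

(* The index set \<^bold>Y is the type 'y.  The spaces C(Y) are the carriers
   S Y :: 'a set with metrics d Y.  A point of the disjoint union of the C(Y) is a pair
   (Y, a) with a \<in> S Y.  The projections are \<pi> Y X \<subseteq> S Y (X \<noteq> Y). *)

definition geodesic_space :: "'a set \<Rightarrow> ('a \<Rightarrow> 'a \<Rightarrow> real) \<Rightarrow> bool" where
  "geodesic_space M d \<longleftrightarrow> Metric_space M d \<and>
     (\<forall>a\<in>M. \<forall>b\<in>M. \<exists>\<gamma>::real \<Rightarrow> 'a. \<gamma> 0 = a \<and> \<gamma> (d a b) = b \<and>
        (\<forall>s\<in>{0..d a b}. \<gamma> s \<in> M) \<and>
        (\<forall>s\<in>{0..d a b}. \<forall>t\<in>{0..d a b}. d (\<gamma> s) (\<gamma> t) = \<bar>s - t\<bar>))"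

(* diameter, extended-real valued (so that unbounded sets have diameter \<infinity>) *)
definition ediam :: "('a \<Rightarrow> 'a \<Rightarrow> real) \<Rightarrow> 'a set \<Rightarrow> ereal" where
  "ediam d A = (SUP p\<in>A \<times> A. ereal (d (fst p) (snd p)))"

(* real-valued diameter (used only for bounded nonempty sets) *)
definition diam :: "('a \<Rightarrow> 'a \<Rightarrow> real) \<Rightarrow> 'a set \<Rightarrow> real" where
  "diam d A = real_of_ereal (ediam d A)"

definition dpi :: "('y \<Rightarrow> 'a \<Rightarrow> 'a \<Rightarrow> real) \<Rightarrow> ('y \<Rightarrow> 'y \<Rightarrow> 'a set) \<Rightarrow> 'y \<Rightarrow> 'y \<Rightarrow> 'y \<Rightarrow> real" where
  "dpi d \<pi> Y X Z = diam (d Y) (\<pi> Y X \<union> \<pi> Y Z)"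

definition proj_system :: "('y \<Rightarrow> 'a set) \<Rightarrow> ('y \<Rightarrow> 'a \<Rightarrow> 'a \<Rightarrow> real) \<Rightarrow> ('y \<Rightarrow> 'y \<Rightarrow> 'a set) \<Rightarrow> real \<Rightarrow> bool" where
  "proj_system S d \<pi> \<xi> \<longleftrightarrow> \<xi> > 0 \<and>
     (\<forall>Y. geodesic_space (S Y) (d Y)) \<and>
     (\<forall>X Y. X \<noteq> Y \<longrightarrow> \<pi> Y X \<subseteq> S Y \<and> \<pi> Y X \<noteq> {} \<and> ediam (d Y) (\<pi> Y X) < ereal \<xi>) \<and>
     (\<forall>X Y Z. X \<noteq> Y \<and> Y \<noteq> Z \<and> X \<noteq> Z \<longrightarrow> min (dpi d \<pi> Y X Z) (dpi d \<pi> Z X Y) < \<xi>) \<and>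
     (\<forall>X Z. finite {Y. Y \<noteq> X \<and> Y \<noteq> Z \<and> dpi d \<pi> Y X Z \<ge> \<xi>})"

(* the set \<H>(X,Z) (with the implicit requirement that all projections used are defined) *)
definition Hset :: "('y \<Rightarrow> 'a \<Rightarrow> 'a \<Rightarrow> real) \<Rightarrow> ('y \<Rightarrow> 'y \<Rightarrow> 'a set) \<Rightarrow> real \<Rightarrow> 'y \<Rightarrow> 'y \<Rightarrow> ('y \<times> 'y) set" where
  "Hset d \<pi> \<xi> X Z = {(X', Z').
      (X' \<noteq> X \<and> Z' \<noteq> X \<and> X' \<noteq> Z \<and> Z' \<noteq> Z \<and>
         dpi d \<pi> X X' Z' > 2 * \<xi> \<and> dpi d \<pi> Z X' Z' > 2 * \<xi>)
    \<or> (X' = X \<and> X \<noteq> Z \<and> Z' \<noteq> Z \<and> dpi d \<pi> Z X Z' > 2 * \<xi>)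
    \<or> (Z' = Z \<and> X' \<noteq> X \<and> X \<noteq> Z \<and> dpi d \<pi> X X' Z > 2 * \<xi>)
    \<or> (X', Z') = (X, Z)}"

definition dY :: "('y \<Rightarrow> 'a \<Rightarrow> 'a \<Rightarrow> real) \<Rightarrow> ('y \<Rightarrow> 'y \<Rightarrow> 'a set) \<Rightarrow> real \<Rightarrow> 'y \<Rightarrow> 'y \<Rightarrow> 'y \<Rightarrow> real" where
  "dY d \<pi> \<xi> Y X Z = Inf {dpi d \<pi> Y X' Z' | X' Z'. (X', Z') \<in> Hset d \<pi> \<xi> X Z \<and> X' \<noteq> Y \<and> Z' \<noteq> Y}"

definition ppi :: "('y \<Rightarrow> 'y \<Rightarrow> 'a set) \<Rightarrow> 'y \<Rightarrow> 'y \<times> 'a \<Rightarrow> 'a set" where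
  "ppi \<pi> Y p = (if fst p = Y then {snd p} else \<pi> Y (fst p))"

definition dpi_pt :: "('y \<Rightarrow> 'a \<Rightarrow> 'a \<Rightarrow> real) \<Rightarrow> ('y \<Rightarrow> 'y \<Rightarrow> 'a set) \<Rightarrow> 'y \<Rightarrow> 'y \<times> 'a \<Rightarrow> 'y \<times> 'a \<Rightarrow> real" where
  "dpi_pt d \<pi> Y p q = diam (d Y) (ppi \<pi> Y p \<union> ppi \<pi> Y q)"

definition dY_pt :: "('y \<Rightarrow> 'a \<Rightarrow> 'a \<Rightarrow> real) \<Rightarrow> ('y \<Rightarrow> 'y \<Rightarrow> 'a set) \<Rightarrow> real \<Rightarrow> 'y \<Rightarrow> 'y \<times> 'a \<Rightarrow> 'y \<times> 'a \<Rightarrow> real" where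
  "dY_pt d \<pi> \<xi> Y p q =
     (if fst p \<noteq> Y \<and> fst q \<noteq> Y then dY d \<pi> \<xi> Y (fst p) (fst q) else dpi_pt d \<pi> Y p q)"

definition YK :: "('y \<Rightarrow> 'a \<Rightarrow> 'a \<Rightarrow> real) \<Rightarrow> ('y \<Rightarrow> 'y \<Rightarrow> 'a set) \<Rightarrow> real \<Rightarrow> real \<Rightarrow> 'y \<Rightarrow> 'y \<Rightarrow> 'y set" where
  "YK d \<pi> \<xi> K X Z = {Y. Y \<noteq> X \<and> Y \<noteq> Z \<and> dY d \<pi> \<xi> Y X Z > K}"

definition YK_pt :: "('y \<Rightarrow> 'a \<Rightarrow> 'a \<Rightarrow> real) \<Rightarrow> ('y \<Rightarrow> 'y \<Rightarrow> 'a set) \<Rightarrow> real \<Rightarrow> real \<Rightarrow> 'y \<times> 'a \<Rightarrow> 'y \<times> 'a \<Rightarrow> 'y set" where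
  "YK_pt d \<pi> \<xi> K p q = {Y. dY_pt d \<pi> \<xi> Y p q > K}"

definition PK_adj :: "('y \<Rightarrow> 'a \<Rightarrow> 'a \<Rightarrow> real) \<Rightarrow> ('y \<Rightarrow> 'y \<Rightarrow> 'a set) \<Rightarrow> real \<Rightarrow> real \<Rightarrow> 'y \<Rightarrow> 'y \<Rightarrow> bool" where
  "PK_adj d \<pi> \<xi> K X Z \<longleftrightarrow> X \<noteq> Z \<and> YK d \<pi> \<xi> K X Z = {}"

(* an elementary step of cost c between points of \<Squnion>_Y C(Y) in \<C>(\<^bold>Y):
   either inside one C(Y), or along an attached edge of length L *)
definition gstep :: "('y \<Rightarrow> 'a set) \<Rightarrow> ('y \<Rightarrow> 'a \<Rightarrow> 'a \<Rightarrow> real) \<Rightarrow> ('y \<Rightarrow> 'y \<Rightarrow> 'a set) \<Rightarrow> real \<Rightarrow> real \<Rightarrow> real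
     \<Rightarrow> 'y \<times> 'a \<Rightarrow> 'y \<times> 'a \<Rightarrow> real \<Rightarrow> bool" where
  "gstep S d \<pi> \<xi> K L p q c \<longleftrightarrow>
     (fst p = fst q \<and> snd p \<in> S (fst p) \<and> snd q \<in> S (fst q) \<and> c = d (fst p) (snd p) (snd q))
   \<or> (PK_adj d \<pi> \<xi> K (fst p) (fst q) \<and> snd p \<in> \<pi> (fst p) (fst q) \<and> snd q \<in> \<pi> (fst q) (fst p) \<and> c = L)"

(* path metric of \<C>(\<^bold>Y) between points of \<Squnion>_Y C(Y): infimum of lengths of chains
   (\<infinity> if there is no chain) *)
definition glued_dist :: "('y \<Rightarrow> 'a set) \<Rightarrow> ('y \<Rightarrow> 'a \<Rightarrow> 'a \<Rightarrow> real) \<Rightarrow> ('y \<Rightarrow> 'y \<Rightarrow> 'a set) \<Rightarrow> real \<Rightarrow> real \<Rightarrow> real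
     \<Rightarrow> 'y \<times> 'a \<Rightarrow> 'y \<times> 'a \<Rightarrow> ereal" where
  "glued_dist S d \<pi> \<xi> K L p q = Inf {ereal (sum_list cs) | ps cs.
      ps \<noteq> [] \<and> hd ps = p \<and> last ps = q \<and> length cs = length ps - 1 \<and>
      (\<forall>i < length cs. gstep S d \<pi> \<xi> K L (ps ! i) (ps ! Suc i) (cs ! i))}"

definition points :: "('y \<Rightarrow> 'a set) \<Rightarrow> ('y \<times> 'a) set" where
  "points S = {p. snd p \<in> S (fst p)}"

end

theory Submission
  imports Defs
begin


lemma ediam_ge: "a \<in> A \<Longrightarrow> b \<in> A \<Longrightarrow> ereal (d a b) \<le> ediam d A"
  unfolding ediam_def by (rule SUP_upper2[where i="(a,b)"]) auto

lemma ediam_le: "(\<And>a b. a \<in> A \<Longrightarrow> b \<in> A \<Longrightarrow> d a b \<le> r) \<Longrightarrow> ediam d A \<le> ereal r"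
  unfolding ediam_def by (rule SUP_least) auto

lemma diam_nonneg: "(\<And>a b. 0 \<le> d a b) \<Longrightarrow> 0 \<le> diam d A"
proof -
  assume nn: "\<And>a b. 0 \<le> d a b"
  show ?thesis
  proof (cases "A = {}")
    case True
    then show ?thesis unfolding diam_def ediam_def by (simp add: bot_ereal_def)
  next
    case False
    then obtain a where a: "a \<in> A" by auto
    have "ereal 0 \<le> ediam d A" using ediam_ge[OF a a, of d] nn[of a a] by (metis ereal_less_eq(3) order_trans)
    then show ?thesis unfolding diam_def by (cases "ediam d A") auto
  qed
qed

lemma le_diam:
  assumes "\<And>a b. a \<in> A \<Longrightarrow> b \<in> A \<Longrightarrow> d a b \<le> r" "a \<in> A" "b \<in> A"
  shows "d a b \<le> diam d A"
proof -
  have 1: "ereal (d a b) \<le> ediam d A" using ediam_ge assms by metis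
  have 2: "ediam d A \<le> ereal r" using ediam_le assms by metis
  show ?thesis using 1 2 unfolding diam_def by (cases "ediam d A") auto
qed

lemma diam_le:
  assumes "\<And>a b. a \<in> A \<Longrightarrow> b \<in> A \<Longrightarrow> d a b \<le> r" "a \<in> A"
  shows "diam d A \<le> r"
proof -
  have 1: "ereal (d a a) \<le> ediam d A" using ediam_ge assms by metis
  have 2: "ediam d A \<le> ereal r" using ediam_le assms by metis
  show ?thesis using 1 2 unfolding diam_def by (cases "ediam d A") auto
qed

lemma diam_lt:
  assumes "ediam d A < ereal r" "a \<in> A" "\<And>a b. 0 \<le> d a b"
  shows "diam d A < r"
proof -
  have 1: "ereal (d a a) \<le> ediam d A" using ediam_ge assms by metis
  show ?thesis using 1 assms(1) unfolding diam_def by (cases "ediam d A") auto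
qed

locale PS =
  fixes S :: "'y \<Rightarrow> 'a set" and d :: "'y \<Rightarrow> 'a \<Rightarrow> 'a \<Rightarrow> real"
    and \<pi> :: "'y \<Rightarrow> 'y \<Rightarrow> 'a set" and \<xi> :: real
  assumes ps: "proj_system S d \<pi> \<xi>"
begin

lemma xi_pos: "\<xi> > 0" using ps unfolding proj_system_def by auto

lemma met: "Metric_space (S Y) (d Y)"
  using ps unfolding proj_system_def geodesic_space_def by auto

lemma nn: "0 \<le> d Y a b" using met Metric_space.nonneg by metis

lemma dcomm: "d Y a b = d Y b a" using met Metric_space.commute by metis

lemma dtri: "a \<in> S Y \<Longrightarrow> b \<in> S Y \<Longrightarrow> c \<in> S Y \<Longrightarrow> d Y a c \<le> d Y a b + d Y b c"
  using met Metric_space.triangle by metis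

lemma dzero: "a \<in> S Y \<Longrightarrow> d Y a a = 0" using met Metric_space.zero by metis

lemma pi_props: "X \<noteq> Y \<Longrightarrow> \<pi> Y X \<subseteq> S Y \<and> \<pi> Y X \<noteq> {} \<and> ediam (d Y) (\<pi> Y X) < ereal \<xi>"
  using ps unfolding proj_system_def by auto

lemma ppi_sub: "p \<in> points S \<Longrightarrow> ppi \<pi> W p \<subseteq> S W"
  using pi_props unfolding ppi_def points_def by auto

lemma ppi_ne: "ppi \<pi> W p \<noteq> {}"
  using pi_props unfolding ppi_def by auto

lemma ppi_small: "p \<in> points S \<Longrightarrow> u \<in> ppi \<pi> W p \<Longrightarrow> v \<in> ppi \<pi> W p \<Longrightarrow> d W u v < \<xi>"
proof -
  assume p: "p \<in> points S" and u: "u \<in> ppi \<pi> W p" and v: "v \<in> ppi \<pi> W p"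
  show ?thesis
  proof (cases "fst p = W")
    case True
    then show ?thesis using u v p xi_pos dzero unfolding ppi_def points_def by auto
  next
    case False
    then have "u \<in> \<pi> W (fst p)" "v \<in> \<pi> W (fst p)" using u v unfolding ppi_def by auto
    then have "ereal (d W u v) \<le> ediam (d W) (\<pi> W (fst p))" by (rule ediam_ge)
    moreover have "ediam (d W) (\<pi> W (fst p)) < ereal \<xi>"
      using False pi_props[of "fst p" W] by auto
    ultimately have "ereal (d W u v) < ereal \<xi>" by (rule order_le_less_trans)
    then show ?thesis by simp
  qed
qed

lemma ubnd:
  assumes p: "p \<in> points S" and q: "q \<in> points S"
  shows "\<exists>r. \<forall>u\<in>ppi \<pi> W p \<union> ppi \<pi> W q. \<forall>v\<in>ppi \<pi> W p \<union> ppi \<pi> W q. d W u v \<le> r"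
proof -
  obtain u0 where u0: "u0 \<in> ppi \<pi> W p" using ppi_ne by blast
  obtain v0 where v0: "v0 \<in> ppi \<pi> W q" using ppi_ne by blast
  have sp: "ppi \<pi> W p \<subseteq> S W" "ppi \<pi> W q \<subseteq> S W" using ppi_sub p q by auto
  have cross: "d W u v \<le> 2*\<xi> + d W u0 v0" if "u \<in> ppi \<pi> W p" "v \<in> ppi \<pi> W q" for u v
  proof -
    have "d W u v \<le> d W u u0 + d W u0 v" using dtri sp that u0 v0 by blast
    moreover have "d W u0 v \<le> d W u0 v0 + d W v0 v" using dtri sp that u0 v0 by blast
    moreover have "d W u u0 < \<xi>" using ppi_small p that u0 by blast
    moreover have "d W v0 v < \<xi>" using ppi_small q that v0 by blast
    ultimately show ?thesis by linarith
  qed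
  have "d W u v \<le> 2*\<xi> + d W u0 v0" if "u\<in>ppi \<pi> W p \<union> ppi \<pi> W q" "v\<in>ppi \<pi> W p \<union> ppi \<pi> W q" for u v
  proof -
    have a: "0 \<le> d W u0 v0" by (rule nn)
    show ?thesis using that
    proof (elim UnE)
      assume "u \<in> ppi \<pi> W p" "v \<in> ppi \<pi> W p" then show ?thesis using ppi_small[OF p] a xi_pos by fastforce
    next
      assume "u \<in> ppi \<pi> W p" "v \<in> ppi \<pi> W q" then show ?thesis using cross by blast
    next
      assume "u \<in> ppi \<pi> W q" "v \<in> ppi \<pi> W p" then show ?thesis using cross dcomm by metis
    next
      assume "u \<in> ppi \<pi> W q" "v \<in> ppi \<pi> W q" then show ?thesis using ppi_small[OF q] a xi_pos by fastforce
    qed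
  qed
  then show ?thesis by blast
qed

abbreviation "\<delta> \<equiv> dpi_pt d \<pi>"

lemma le_delta:
  "p \<in> points S \<Longrightarrow> q \<in> points S \<Longrightarrow> u \<in> ppi \<pi> W p \<union> ppi \<pi> W q \<Longrightarrow> v \<in> ppi \<pi> W p \<union> ppi \<pi> W q
   \<Longrightarrow> d W u v \<le> \<delta> W p q"
proof -
  assume p: "p \<in> points S" and q: "q \<in> points S" and u: "u \<in> ppi \<pi> W p \<union> ppi \<pi> W q"
     and v: "v \<in> ppi \<pi> W p \<union> ppi \<pi> W q"
  obtain r where r: "\<forall>u\<in>ppi \<pi> W p \<union> ppi \<pi> W q. \<forall>v\<in>ppi \<pi> W p \<union> ppi \<pi> W q. d W u v \<le> r"
    using ubnd[OF p q] by blast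
  show ?thesis unfolding dpi_pt_def by (rule le_diam[of _ _ r, OF _ u v]) (use r in blast)
qed

lemma delta_le:
  assumes "\<And>u v. u \<in> ppi \<pi> W p \<union> ppi \<pi> W q \<Longrightarrow> v \<in> ppi \<pi> W p \<union> ppi \<pi> W q \<Longrightarrow> d W u v \<le> r"
  shows "\<delta> W p q \<le> r"
proof -
  obtain u where "u \<in> ppi \<pi> W p" using ppi_ne by blast
  then have "u \<in> ppi \<pi> W p \<union> ppi \<pi> W q" by (rule UnI1)
  show ?thesis unfolding dpi_pt_def
    apply (rule diam_le[where a=u])
     apply (erule (1) assms)
    apply (rule \<open>u \<in> ppi \<pi> W p \<union> ppi \<pi> W q\<close>)
    done
qed

lemma delta_nn: "0 \<le> \<delta> W p q"
  unfolding dpi_pt_def by (rule diam_nonneg) (rule nn)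

lemma delta_sym: "\<delta> W p q = \<delta> W q p"
  unfolding dpi_pt_def by (simp add: Un_commute)

lemma delta_tri:
  assumes p: "p \<in> points S" and q: "q \<in> points S" and r: "r \<in> points S"
  shows "\<delta> W p r \<le> \<delta> W p q + \<delta> W q r"
proof (rule delta_le)
  fix u v assume u: "u \<in> ppi \<pi> W p \<union> ppi \<pi> W r" and v: "v \<in> ppi \<pi> W p \<union> ppi \<pi> W r"
  obtain b where b: "b \<in> ppi \<pi> W q" using ppi_ne by blast
  have n1: "0 \<le> \<delta> W p q" "0 \<le> \<delta> W q r" by (rule delta_nn)+
  have sp: "ppi \<pi> W p \<subseteq> S W" "ppi \<pi> W q \<subseteq> S W" "ppi \<pi> W r \<subseteq> S W" using ppi_sub p q r by auto
  have cr: "d W u v \<le> \<delta> W p q + \<delta> W q r" if "u \<in> ppi \<pi> W p" "v \<in> ppi \<pi> W r" for u v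
  proof -
    have "d W u v \<le> d W u b + d W b v" using dtri sp that b by blast
    moreover have "d W u b \<le> \<delta> W p q" using le_delta[OF p q] that b by blast
    moreover have "d W b v \<le> \<delta> W q r" using le_delta[OF q r] that b by blast
    ultimately show ?thesis by linarith
  qed
  show "d W u v \<le> \<delta> W p q + \<delta> W q r" using u v
  proof (elim UnE)
    assume "u \<in> ppi \<pi> W p" "v \<in> ppi \<pi> W p"
    then have "d W u v \<le> \<delta> W p q" using le_delta[OF p q] by blast
    then show ?thesis using n1 by linarith
  next
    assume "u \<in> ppi \<pi> W p" "v \<in> ppi \<pi> W r" then show ?thesis using cr by blast
  next
    assume "u \<in> ppi \<pi> W r" "v \<in> ppi \<pi> W p" then show ?thesis using cr dcomm by metis
  next
    assume "u \<in> ppi \<pi> W r" "v \<in> ppi \<pi> W r"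
    then have "d W u v \<le> \<delta> W q r" using le_delta[OF q r] by blast
    then show ?thesis using n1 by linarith
  qed
qed

lemma ppi_eq: "fst p = fst q \<Longrightarrow> fst p \<noteq> W \<Longrightarrow> ppi \<pi> W p = ppi \<pi> W q"
  unfolding ppi_def by auto

lemma delta_cong: "fst p = fst q \<Longrightarrow> fst p \<noteq> W \<Longrightarrow> \<delta> W p r = \<delta> W q r"
  unfolding dpi_pt_def using ppi_eq by metis

lemma delta_same: "fst p = fst q \<Longrightarrow> fst p \<noteq> W \<Longrightarrow> \<delta> W p q < \<xi>"
proof -
  assume a: "fst p = fst q" "fst p \<noteq> W"
  then have e: "ppi \<pi> W p \<union> ppi \<pi> W q = \<pi> W (fst p)" unfolding ppi_def by auto
  obtain u where "u \<in> \<pi> W (fst p)" using pi_props a by blast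
  moreover have "ediam (d W) (\<pi> W (fst p)) < ereal \<xi>" using pi_props a by blast
  ultimately show ?thesis unfolding dpi_pt_def e by (intro diam_lt[of _ _ _ u]) (auto intro: nn)
qed

lemma delta_self: "p \<in> points S \<Longrightarrow> \<delta> W p p < \<xi>"
proof (cases "fst p = W")
  case True
  assume p: "p \<in> points S"
  have "\<delta> W p p \<le> 0"
    by (rule delta_le) (use True p dzero in \<open>auto simp: ppi_def points_def\<close>)
  then show ?thesis using xi_pos by linarith
next
  case False then show ?thesis using delta_same by blast
qed

lemma behr:
  assumes "fst p \<noteq> fst a" "fst p \<noteq> fst b" "fst a \<noteq> fst b"
  shows "min (\<delta> (fst a) p b) (\<delta> (fst b) p a) < \<xi>"
proof -
  have "min (dpi d \<pi> (fst a) (fst p) (fst b)) (dpi d \<pi> (fst b) (fst p) (fst a)) < \<xi>"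
    using ps assms unfolding proj_system_def by blast
  then show ?thesis using assms unfolding dpi_pt_def dpi_def ppi_def by auto
qed

lemma dY_le: "dY_pt d \<pi> \<xi> W p q \<le> \<delta> W p q"
proof (cases "fst p \<noteq> W \<and> fst q \<noteq> W")
  case True
  let ?A = "{dpi d \<pi> W X' Z' | X' Z'. (X', Z') \<in> Hset d \<pi> \<xi> (fst p) (fst q) \<and> X' \<noteq> W \<and> Z' \<noteq> W}"
  have mem: "dpi d \<pi> W (fst p) (fst q) \<in> ?A" using True unfolding Hset_def by blast
  have bdd: "bdd_below ?A" unfolding bdd_below_def dpi_def
    by (rule exI[of _ 0]) (auto intro: diam_nonneg nn)
  have "dY d \<pi> \<xi> W (fst p) (fst q) \<le> dpi d \<pi> W (fst p) (fst q)"
    unfolding dY_def by (rule cInf_lower[OF mem bdd])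
  then show ?thesis using True unfolding dY_pt_def dpi_pt_def dpi_def ppi_def by auto
next
  case False
  then show ?thesis unfolding dY_pt_def by auto
qed

end


context PS begin

lemma gstep_points:
  assumes "gstep S d \<pi> \<xi> K L p q c"
  shows "p \<in> points S" "q \<in> points S"
proof -
  have "(fst p = fst q \<and> snd p \<in> S (fst p) \<and> snd q \<in> S (fst q)) \<or>
        (fst p \<noteq> fst q \<and> snd p \<in> \<pi> (fst p) (fst q) \<and> snd q \<in> \<pi> (fst q) (fst p))"
    using assms unfolding gstep_def PK_adj_def by blast
  then show "p \<in> points S" "q \<in> points S"
    using pi_props[of "fst q" "fst p"] pi_props[of "fst p" "fst q"] unfolding points_def by auto
qed

lemma gstep_cases: "gstep S d \<pi> \<xi> K L p q c \<Longrightarrow> fst p = fst q \<or> c = L"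
  unfolding gstep_def by blast

lemma glued_le:
  assumes "gstep S d \<pi> \<xi> K L p q c"
  shows "glued_dist S d \<pi> \<xi> K L p q \<le> ereal c"
proof -
  have "ereal (sum_list [c]) \<in> {ereal (sum_list cs) | ps cs.
      ps \<noteq> [] \<and> hd ps = p \<and> last ps = q \<and> length cs = length ps - 1 \<and>
      (\<forall>i < length cs. gstep S d \<pi> \<xi> K L (ps ! i) (ps ! Suc i) (cs ! i))}"
    apply (rule CollectI)
    apply (rule exI[of _ "[p,q]"])
    apply (rule exI[of _ "[c]"])
    using assms by auto
  then show ?thesis unfolding glued_dist_def by (simp add: Inf_lower)
qed

lemma order_half:
  assumes WW: "W \<noteq> W'" and w: "w \<in> points S" "fst w = W" and w': "w' \<in> points S" "fst w' = W'"
    and x: "x \<in> points S" and z: "z \<in> points S"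
    and h1: "\<delta> W w' z \<ge> \<xi>" and h2: "\<delta> W' x z \<ge> 2*\<xi>"
  shows "\<delta> W x w' < \<xi> \<and> \<delta> W' w z < \<xi>"
proof -
  have A: "\<delta> W' w z < \<xi>"
  proof (cases "fst z = W'")
    case True
    then have "\<delta> W w' z = \<delta> W z z" using delta_cong[of w' z W z] w' WW by simp
    then show ?thesis using delta_self[OF z, of W] h1 by linarith
  next
    case False
    show ?thesis
    proof (cases "fst z = W")
      case True
      then have "\<delta> W' w z = \<delta> W' z z" using delta_cong[of w z W' z] w WW by simp
      then show ?thesis using delta_self[OF z, of W'] by linarith
    next
      case False2: False
      have "min (\<delta> (fst w) z w') (\<delta> (fst w') z w) < \<xi>"
        using behr[of z w w'] False False2 w w' WW by simp
      then have "min (\<delta> W w' z) (\<delta> W' w z) < \<xi>" using w w' delta_sym by simp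
      then show ?thesis using h1 by linarith
    qed
  qed
  have B: "\<delta> W' x w \<ge> \<xi>"
    using delta_tri[OF x w(1) z, of W'] A h2 by linarith
  have C: "\<delta> W x w' < \<xi>"
  proof (cases "fst x = W")
    case True
    then have "\<delta> W' w x = \<delta> W' x x" using delta_cong[of w x W' x] w WW by simp
    then show ?thesis using delta_self[OF x, of W'] B delta_sym[of W' x w] by linarith
  next
    case False
    show ?thesis
    proof (cases "fst x = W'")
      case True
      then have "\<delta> W x w' = \<delta> W w' w'" using delta_cong[of x w' W w'] w' WW by simp
      then show ?thesis using delta_self[OF w'(1), of W] by linarith
    next
      case False2: False
      have "min (\<delta> (fst w) x w') (\<delta> (fst w') x w) < \<xi>"
        using behr[of x w w'] False False2 w w' WW by simp
      then have "min (\<delta> W x w') (\<delta> W' x w) < \<xi>" using w w' by simp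
      then show ?thesis using B by linarith
    qed
  qed
  show ?thesis using A C by blast
qed

lemma order_full:
  assumes WW: "W \<noteq> W'" and w: "w \<in> points S" "fst w = W" and w': "w' \<in> points S" "fst w' = W'"
    and x: "x \<in> points S" and z: "z \<in> points S"
    and h1: "\<delta> W x z > K'" and h2: "\<delta> W' x z > K'" and K': "K' \<ge> 4*\<xi>"
  shows "(\<delta> W x w' < \<xi> \<and> \<delta> W' w z < \<xi>) \<or> (\<delta> W w' z < \<xi> \<and> \<delta> W' x w < \<xi>)"
proof (cases "\<delta> W w' z \<ge> \<xi>")
  case True
  have "\<delta> W' x z \<ge> 2*\<xi>" using h2 K' xi_pos by linarith
  then show ?thesis using order_half[OF WW w w' x z True] by blast
next
  case False
  have t: "\<delta> W x z \<le> \<delta> W x w' + \<delta> W w' z" by (rule delta_tri[OF x w'(1) z])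
  have "\<delta> W w' x \<ge> \<xi>" using t False h1 K' xi_pos delta_sym[of W w' x] by linarith
  moreover have "\<delta> W' z x \<ge> 2*\<xi>" using h2 K' xi_pos delta_sym[of W' z x] by linarith
  ultimately have "\<delta> W z w' < \<xi> \<and> \<delta> W' w x < \<xi>" using order_half[OF WW w w' z x] by blast
  then show ?thesis using delta_sym[of W z w'] delta_sym[of W' w x] by auto
qed

lemma core:
  assumes WW: "W \<noteq> W'" and w: "w \<in> points S" "fst w = W" and w': "w' \<in> points S" "fst w' = W'"
    and x: "x \<in> points S" and z: "z \<in> points S"
    and O1: "\<delta> W' x w < \<xi>" and O2: "\<delta> W w' z < \<xi>"
    and p: "p \<in> points S" and q: "q \<in> points S"
    and f1: "\<delta> W p z > R" and f2: "\<delta> W' x q > R"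
    and st: "fst p = fst q \<or> (\<forall>V. \<delta> V p q \<le> \<bar>L\<bar>)"
    and R: "R = \<bar>L\<bar> + 4*\<xi>"
  shows False
proof -
  have P1: "\<delta> W' x p < 2*\<xi>"
  proof (cases "fst p = W'")
    case True
    then have "\<delta> W p z = \<delta> W w' z" using delta_cong[of p w' W z] w' WW by simp
    then show ?thesis using O2 f1 R xi_pos by linarith
  next
    case False
    show ?thesis
    proof (cases "fst p = W")
      case True
      then have "\<delta> W' p x = \<delta> W' w x" using delta_cong[of p w W' x] w WW by simp
      then show ?thesis using O1 delta_sym[of W' x p] delta_sym[of W' x w] xi_pos by linarith
    next
      case False2: False
      have "\<delta> W p z \<le> \<delta> W p w' + \<delta> W w' z" by (rule delta_tri[OF p w'(1) z])
      then have big: "\<delta> W p w' \<ge> \<xi>" using f1 O2 R xi_pos by linarith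
      have "min (\<delta> (fst w) p w') (\<delta> (fst w') p w) < \<xi>"
        using behr[of p w w'] False False2 w w' WW by simp
      then have "\<delta> W' p w < \<xi>" using big w w' by simp
      then show ?thesis using delta_tri[OF x w(1) p, of W'] O1 delta_sym[of W' w p] by linarith
    qed
  qed
  have P2: "\<delta> W q z < 2*\<xi>"
  proof (cases "fst q = W")
    case True
    then have "\<delta> W' q x = \<delta> W' w x" using delta_cong[of q w W' x] w WW by simp
    then show ?thesis using O1 f2 R xi_pos delta_sym[of W' x q] delta_sym[of W' x w] by linarith
  next
    case False
    show ?thesis
    proof (cases "fst q = W'")
      case True
      then have "\<delta> W q z = \<delta> W w' z" using delta_cong[of q w' W z] w' WW by simp
      then show ?thesis using O2 xi_pos by linarith
    next
      case False2: False
      have "\<delta> W' x q \<le> \<delta> W' x w + \<delta> W' w q" by (rule delta_tri[OF x w(1) q])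
      then have big: "\<delta> W' q w \<ge> \<xi>" using f2 O1 R xi_pos delta_sym[of W' w q] by linarith
      have "min (\<delta> (fst w) q w') (\<delta> (fst w') q w) < \<xi>"
        using behr[of q w w'] False False2 w w' WW by simp
      then have "\<delta> W q w' < \<xi>" using big w w' by simp
      then show ?thesis using delta_tri[OF q w'(1) z, of W] O2 by linarith
    qed
  qed
  have m1: "\<delta> W' p q > R - 2*\<xi>" using delta_tri[OF x p q, of W'] P1 f2 by linarith
  have m2: "\<delta> W p q > R - 2*\<xi>" using delta_tri[OF p q z, of W] P2 f1 by linarith
  show False
  proof (cases "fst p = fst q")
    case True
    show False
    proof (cases "fst p = W")
      case True2: True
      then have "fst p \<noteq> W'" using WW by simp
      then have "\<delta> W' p q < \<xi>" using delta_same True by blast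
      then show False using m1 R xi_pos by linarith
    next
      case False
      then have "\<delta> W p q < \<xi>" using delta_same True by blast
      then show False using m2 R xi_pos by linarith
    qed
  next
    case False
    then have "\<delta> W p q \<le> \<bar>L\<bar>" using st by blast
    then show False using m2 R xi_pos by linarith
  qed
qed

end



context PS begin

lemma step_le:
  assumes H: "\<forall>Y. \<forall>x\<in>points S. \<forall>z\<in>points S. glued_dist S d \<pi> \<xi> K L x z \<ge> ereal (\<delta> Y x z)"
    and g: "gstep S d \<pi> \<xi> K L p q c"
  shows "\<delta> V p q \<le> c"
proof -
  have "ereal (\<delta> V p q) \<le> glued_dist S d \<pi> \<xi> K L p q"
    using H gstep_points[OF g] by blast
  also have "\<dots> \<le> ereal c" by (rule glued_le[OF g])
  finally show ?thesis by simp
qed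

lemma fin_YK:
  assumes K': "K' \<ge> \<xi>"
  shows "finite (YK_pt d \<pi> \<xi> K' x z)"
proof -
  have fin: "finite {Y. Y \<noteq> fst x \<and> Y \<noteq> fst z \<and> dpi d \<pi> Y (fst x) (fst z) \<ge> \<xi>}"
    using ps unfolding proj_system_def by blast
  have "YK_pt d \<pi> \<xi> K' x z \<subseteq> {fst x, fst z} \<union> {Y. Y \<noteq> fst x \<and> Y \<noteq> fst z \<and> dpi d \<pi> Y (fst x) (fst z) \<ge> \<xi>}"
  proof
    fix Y assume Y: "Y \<in> YK_pt d \<pi> \<xi> K' x z"
    show "Y \<in> {fst x, fst z} \<union> {Y. Y \<noteq> fst x \<and> Y \<noteq> fst z \<and> dpi d \<pi> Y (fst x) (fst z) \<ge> \<xi>}"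
    proof (cases "Y = fst x \<or> Y = fst z")
      case True then show ?thesis by blast
    next
      case False
      have "dY_pt d \<pi> \<xi> Y x z > K'" using Y unfolding YK_pt_def by simp
      then have "\<delta> Y x z > K'" using dY_le[of Y x z] by linarith
      moreover have "\<delta> Y x z = dpi d \<pi> Y (fst x) (fst z)"
        using False unfolding dpi_pt_def dpi_def ppi_def by auto
      ultimately show ?thesis using False K' by auto
    qed
  qed
  then show ?thesis using fin by (meson finite.emptyI finite.insertI finite_UnI finite_subset)
qed

lemma chain_main:
  assumes H: "\<forall>Y. \<forall>x\<in>points S. \<forall>z\<in>points S. glued_dist S d \<pi> \<xi> K L x z \<ge> ereal (\<delta> Y x z)"
    and x: "x \<in> points S" and z: "z \<in> points S"
    and ne: "ps \<noteq> []" and hd: "hd ps = x" and la: "last ps = z" and lc: "length cs = length ps - 1"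
    and steps: "\<forall>i < length cs. gstep S d \<pi> \<xi> K L (ps ! i) (ps ! Suc i) (cs ! i)"
    and R: "R = \<bar>L\<bar> + 4*\<xi>" and K': "K' \<ge> 4*R + \<xi>"
  shows "(\<Sum>W\<in>YK_pt d \<pi> \<xi> K' x z. dY_pt d \<pi> \<xi> W x z) \<le> 2 * sum_list cs"
proof -
  define n where "n = length cs"
  define P where "P = (\<lambda>i. ps ! i)"
  define F where "F = YK_pt d \<pi> \<xi> K' x z"
  have Rge: "R \<ge> 4*\<xi>" using R by simp
  have xi: "\<xi> > 0" by (rule xi_pos)
  have len: "length ps = Suc n" using lc ne n_def by (cases ps) auto
  have P0: "P 0 = x" using hd ne unfolding P_def by (simp add: hd_conv_nth)
  have Pn: "P n = z" using la ne len unfolding P_def by (simp add: last_conv_nth)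
  have gs: "gstep S d \<pi> \<xi> K L (P i) (P (Suc i)) (cs ! i)" if "i < n" for i
    using steps that unfolding P_def n_def by blast
  have pts: "P i \<in> points S" if "i \<le> n" for i
  proof (cases "i < n")
    case True then show ?thesis using gstep_points(1)[OF gs[OF True]] by blast
  next
    case False then have "i = n" using that by simp
    then show ?thesis using Pn z by simp
  qed
  have stb: "\<delta> V (P i) (P (Suc i)) \<le> cs ! i" if "i < n" for i V
    by (rule step_le[OF H gs[OF that]])
  have cnn: "0 \<le> cs ! i" if "i < n" for i
    using stb[OF that, of undefined] delta_nn[of undefined "P i" "P (Suc i)"] by linarith
  have sst: "fst (P i) = fst (P (Suc i)) \<or> (\<forall>V. \<delta> V (P i) (P (Suc i)) \<le> \<bar>L\<bar>)" if "i < n" for i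
  proof (cases "fst (P i) = fst (P (Suc i))")
    case True then show ?thesis by blast
  next
    case False
    then have "cs ! i = L" using gstep_cases[OF gs[OF that]] by blast
    then show ?thesis using stb[OF that] by (metis abs_ge_self order_trans)
  qed
  have path: "a < b \<Longrightarrow> b \<le> n \<Longrightarrow> \<delta> W (P a) (P b) \<le> (\<Sum>k\<in>{a..<b}. cs ! k)" for a b W
  proof (induction b)
    case 0 then show ?case by simp
  next
    case (Suc b)
    show ?case
    proof (cases "a = b")
      case True
      then show ?thesis using stb[of b W] Suc.prems by simp
    next
      case False
      then have ab: "a < b" using Suc.prems by simp
      have IH: "\<delta> W (P a) (P b) \<le> (\<Sum>k\<in>{a..<b}. cs ! k)" using Suc.IH ab Suc.prems by simp
      have "\<delta> W (P a) (P (Suc b)) \<le> \<delta> W (P a) (P b) + \<delta> W (P b) (P (Suc b))"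
        by (rule delta_tri) (use pts Suc.prems ab in auto)
      also have "\<dots> \<le> (\<Sum>k\<in>{a..<b}. cs ! k) + cs ! b" using IH stb[of b W] Suc.prems by simp
      also have "\<dots> = (\<Sum>k\<in>{a..<Suc b}. cs ! k)" using ab by simp
      finally show ?thesis .
    qed
  qed
  define A where "A = (\<lambda>W. GREATEST i. i \<le> n \<and> \<delta> W x (P i) \<le> R)"
  define B where "B = (\<lambda>W. LEAST j. A W \<le> j \<and> j \<le> n \<and> \<delta> W (P j) z \<le> R)"
  have A0: "0 \<le> n \<and> \<delta> W x (P 0) \<le> R" for W
    using delta_self[OF x, of W] P0 Rge xi by simp
  have Aprop: "A W \<le> n \<and> \<delta> W x (P (A W)) \<le> R" for W
    unfolding A_def by (rule GreatestI_nat[where k=0 and b=n], rule A0, blast)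
  have Aafter: "\<delta> W x (P i) > R" if "A W < i" "i \<le> n" for W i
  proof (rule ccontr)
    assume "\<not> \<delta> W x (P i) > R"
    then have "i \<le> A W" unfolding A_def by (intro Greatest_le_nat[where b=n]) (use that in auto)
    then show False using that by simp
  qed
  have Bprop: "A W \<le> B W \<and> B W \<le> n \<and> \<delta> W (P (B W)) z \<le> R" for W
  proof -
    have "A W \<le> n \<and> n \<le> n \<and> \<delta> W (P n) z \<le> R"
      using Aprop[of W] delta_self[OF z, of W] Pn Rge xi by simp
    then show ?thesis unfolding B_def by (rule LeastI)
  qed
  have Bbefore: "\<delta> W (P j) z > R" if "A W \<le> j" "j < B W" for W j
  proof -
    have "\<not> (A W \<le> j \<and> j \<le> n \<and> \<delta> W (P j) z \<le> R)"
      using not_less_Least[of j] that unfolding B_def by blast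
    moreover have "j \<le> n" using that Bprop[of W] by simp
    ultimately show ?thesis using that by auto
  qed
  have Dgt: "\<delta> W x z > K'" if "W \<in> F" for W
    using that dY_le[of W x z] unfolding F_def YK_pt_def by simp
  have AB: "A W < B W" if "W \<in> F" for W
  proof (rule ccontr)
    assume "\<not> A W < B W"
    then have e: "A W = B W" using Bprop[of W] by simp
    have "\<delta> W x z \<le> \<delta> W x (P (A W)) + \<delta> W (P (A W)) z"
      by (rule delta_tri) (use x z pts Aprop in auto)
    then show False using Aprop[of W] Bprop[of W] e Dgt[OF that] K' xi Rge by simp
  qed
  have bound: "dY_pt d \<pi> \<xi> W x z \<le> 2 * (\<Sum>k\<in>{A W..<B W}. cs ! k)" if "W \<in> F" for W
  proof -
    have pa: "P (A W) \<in> points S" "P (B W) \<in> points S" using pts Aprop Bprop by auto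
    have t1: "\<delta> W x z \<le> \<delta> W x (P (A W)) + \<delta> W (P (A W)) z"
      by (rule delta_tri[OF x pa(1) z])
    have t2: "\<delta> W (P (A W)) z \<le> \<delta> W (P (A W)) (P (B W)) + \<delta> W (P (B W)) z"
      by (rule delta_tri[OF pa z])
    have pp: "\<delta> W (P (A W)) (P (B W)) \<le> (\<Sum>k\<in>{A W..<B W}. cs ! k)"
      using path AB[OF that] Bprop[of W] by blast
    have a1: "\<delta> W x (P (A W)) \<le> R" using Aprop[of W] by blast
    have b1: "\<delta> W (P (B W)) z \<le> R" using Bprop[of W] by blast
    have "\<delta> W x z \<le> 2 * (\<Sum>k\<in>{A W..<B W}. cs ! k)"
      using t1 t2 pp a1 b1 Dgt[OF that] K' Rge xi by linarith
    then show ?thesis using dY_le[of W x z] by linarith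
  qed
  have ptW: "\<exists>w. w \<in> points S \<and> fst w = W" if neq: "W \<noteq> W'" for W W'
  proof -
    have pp: "\<pi> W W' \<subseteq> S W \<and> \<pi> W W' \<noteq> {}" using pi_props[of W' W] neq by blast
    obtain s where "s \<in> \<pi> W W'" using pp by blast
    then have "s \<in> S W" using pp by blast
    then show ?thesis unfolding points_def by (intro exI[of _ "(W, s)"]) simp
  qed
  have disj: "{A W..<B W} \<inter> {A W'..<B W'} = {}" if hw: "W \<in> F" "W' \<in> F" "W \<noteq> W'" for W W'
  proof (rule ccontr)
    assume "{A W..<B W} \<inter> {A W'..<B W'} \<noteq> {}"
    then obtain i where i0: "i \<in> {A W..<B W}" "i \<in> {A W'..<B W'}" by blast
    then have i: "A W \<le> i" "i < B W" "A W' \<le> i" "i < B W'" by auto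
    have iN: "i < n" using i Bprop[of W] by simp
    have pi: "P i \<in> points S" "P (Suc i) \<in> points S" using pts iN by auto
    have f1: "\<delta> W (P i) z > R" "\<delta> W' (P i) z > R" using Bbefore i by auto
    have f2: "\<delta> W x (P (Suc i)) > R" "\<delta> W' x (P (Suc i)) > R"
      using Aafter i Bprop[of W] Bprop[of W'] by auto
    obtain w where w: "w \<in> points S" "fst w = W" using ptW hw(3) by blast
    obtain w' where w': "w' \<in> points S" "fst w' = W'" using ptW hw(3) by metis
    have K4: "K' \<ge> 4*\<xi>" using K' Rge xi by linarith
    have ord: "(\<delta> W x w' < \<xi> \<and> \<delta> W' w z < \<xi>) \<or> (\<delta> W w' z < \<xi> \<and> \<delta> W' x w < \<xi>)"
      by (rule order_full[OF hw(3) w w' x z Dgt[OF hw(1)] Dgt[OF hw(2)] K4])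
    then show False
    proof
      assume o: "\<delta> W x w' < \<xi> \<and> \<delta> W' w z < \<xi>"
      have ne': "W' \<noteq> W" using hw(3) by simp
      show False
        by (rule core[OF ne' w' w x z _ _ pi f1(2) f2(1) sst[OF iN] R]) (use o in auto)
    next
      assume o: "\<delta> W w' z < \<xi> \<and> \<delta> W' x w < \<xi>"
      show False
        by (rule core[OF hw(3) w w' x z _ _ pi f1(1) f2(2) sst[OF iN] R]) (use o in auto)
    qed
  qed
  have finF: "finite F" unfolding F_def by (rule fin_YK) (use K' Rge xi in linarith)
  have "(\<Sum>W\<in>F. dY_pt d \<pi> \<xi> W x z) \<le> (\<Sum>W\<in>F. 2 * (\<Sum>k\<in>{A W..<B W}. cs ! k))"
    by (rule sum_mono) (rule bound)
  also have "\<dots> = 2 * (\<Sum>W\<in>F. (\<Sum>k\<in>{A W..<B W}. cs ! k))" by (simp add: sum_distrib_left)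
  also have "(\<Sum>W\<in>F. (\<Sum>k\<in>{A W..<B W}. cs ! k)) = (\<Sum>k\<in>(\<Union>W\<in>F. {A W..<B W}). cs ! k)"
    by (rule sum.UNION_disjoint[symmetric]) (use finF disj in auto)
  also have "(\<Sum>k\<in>(\<Union>W\<in>F. {A W..<B W}). cs ! k) \<le> (\<Sum>k\<in>{0..<n}. cs ! k)"
  proof (rule sum_mono2)
    show "(\<Union>W\<in>F. {A W..<B W}) \<subseteq> {0..<n}"
    proof (rule UN_least)
      fix W
      have "B W \<le> n" using Bprop[of W] by blast
      then show "{A W..<B W} \<subseteq> {0..<n}" by auto
    qed
  qed (use cnn in auto)
  also have "(\<Sum>k\<in>{0..<n}. cs ! k) = sum_list cs" unfolding n_def by (simp add: sum_list_sum_nth)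
  finally show ?thesis unfolding F_def by simp
qed

end

theorem corollary3p12:
  fixes S :: "'y \<Rightarrow> 'a set" and d :: "'y \<Rightarrow> 'a \<Rightarrow> 'a \<Rightarrow> real"
    and \<pi> :: "'y \<Rightarrow> 'y \<Rightarrow> 'a set" and \<xi> :: real and c :: real
  assumes "proj_system S d \<pi> \<xi>"
  shows "\<exists>K0. \<forall>K \<ge> K0. \<forall>L.
           \<bar>L - K\<bar> \<le> c \<and>
           (\<forall>Y. \<forall>x\<in>points S. \<forall>z\<in>points S. glued_dist S d \<pi> \<xi> K L x z \<ge> ereal (dpi_pt d \<pi> Y x z))
           \<longrightarrow> (\<exists>K' > K. \<forall>x\<in>points S. \<forall>z\<in>points S.
                  finite (YK_pt d \<pi> \<xi> K' x z) \<and>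
                  glued_dist S d \<pi> \<xi> K L x z \<ge>
                    ereal (1/2 * (\<Sum>W\<in>YK_pt d \<pi> \<xi> K' x z. dY_pt d \<pi> \<xi> W x z)))"
proof -
  interpret PS S d \<pi> \<xi> by unfold_locales (rule assms)
  have xi: "\<xi> > 0" by (rule xi_pos)
  show ?thesis
  proof (rule exI[of _ 0], intro allI impI)
    fix K L :: real
    assume "0 \<le> K" and hyp: "\<bar>L - K\<bar> \<le> c \<and>
           (\<forall>Y. \<forall>x\<in>points S. \<forall>z\<in>points S. glued_dist S d \<pi> \<xi> K L x z \<ge> ereal (dpi_pt d \<pi> Y x z))"
    then have H: "\<forall>Y. \<forall>x\<in>points S. \<forall>z\<in>points S. glued_dist S d \<pi> \<xi> K L x z \<ge> ereal (\<delta> Y x z)"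
      by blast
    define R where "R = \<bar>L\<bar> + 4*\<xi>"
    define K' where "K' = \<bar>K\<bar> + 4*R + \<xi>"
    have K'1: "K' > K" unfolding K'_def R_def using xi abs_ge_self[of K] abs_ge_zero[of L] by (smt (verit))
    have K'2: "K' \<ge> 4*R + \<xi>" unfolding K'_def by simp
    show "\<exists>K' > K. \<forall>x\<in>points S. \<forall>z\<in>points S.
                  finite (YK_pt d \<pi> \<xi> K' x z) \<and>
                  glued_dist S d \<pi> \<xi> K L x z \<ge>
                    ereal (1/2 * (\<Sum>W\<in>YK_pt d \<pi> \<xi> K' x z. dY_pt d \<pi> \<xi> W x z))"
    proof (intro exI[of _ K'] conjI ballI K'1)
      fix x z assume x: "x \<in> points S" and z: "z \<in> points S"
      show "finite (YK_pt d \<pi> \<xi> K' x z)"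
        by (rule fin_YK) (use K'2 R_def xi in linarith)
      show "glued_dist S d \<pi> \<xi> K L x z \<ge> ereal (1/2 * (\<Sum>W\<in>YK_pt d \<pi> \<xi> K' x z. dY_pt d \<pi> \<xi> W x z))"
        unfolding glued_dist_def
      proof (rule Inf_greatest)
        fix e assume "e \<in> {ereal (sum_list cs) | ps cs.
          ps \<noteq> [] \<and> hd ps = x \<and> last ps = z \<and> length cs = length ps - 1 \<and>
          (\<forall>i < length cs. gstep S d \<pi> \<xi> K L (ps ! i) (ps ! Suc i) (cs ! i))}"
        then obtain ps cs where e: "e = ereal (sum_list cs)" and c: "ps \<noteq> []" "hd ps = x" "last ps = z"
          "length cs = length ps - 1" "\<forall>i < length cs. gstep S d \<pi> \<xi> K L (ps ! i) (ps ! Suc i) (cs ! i)"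
          by blast
        have "(\<Sum>W\<in>YK_pt d \<pi> \<xi> K' x z. dY_pt d \<pi> \<xi> W x z) \<le> 2 * sum_list cs"
          by (rule chain_main[OF H x z c R_def K'2])
        then show "ereal (1/2 * (\<Sum>W\<in>YK_pt d \<pi> \<xi> K' x z. dY_pt d \<pi> \<xi> W x z)) \<le> e"
          unfolding e by simp
      qed
    qed
  qed
qed

end
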